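(* Let $\bm\mu$ be an Angelesco system on the unit circle with arcs $\Gamma_1,\dots,\Gamma_r$ and the associated square-root branch (see context). Let $\bm n\in\mathbb N^r$ be $\phi$-normal, $\tau\in\partial\mathbb D$, and let $X\not\equiv0$ be a $\tau$-invariant paraorthogonal function for $\bm n$. Then for each $j=1,\dots,r$, the polynomial $z^{(|\bm n|+1)/2}X(z)$ has at least $n_j$ distinct zeros of odd multiplicity in $\operatorname{Int}(\Gamma_j)$ (the arc $\Gamma_j$ without its endpoints).
   Context: $\partial\mathbb D=\{|z|=1\}$; measures are finite, positive, Borel, with infinite support. Angelesco system: closed arcs $\Gamma_j\subset\partial\mathbb D$ with $\operatorname{supp}\mu_j\subseteq\Gamma_j$ and $\Gamma_j\cap\Gamma_k$ contained in the set of endpoints for $j\ne k$; $t_0\in\mathbb R$ and the ordering of the arcs are such that $t_0\le\theta_1\le\dots\le\theta_r\le t_0+2\pi$ whenever $e^{i\theta_k}\in\Gamma_k$; $\mu_r$ has no point mass at $e^{it_0}$. Branch: $z^{k/2}=|z|^{k/2}\exp(ik\arg_{[t_0,t_0+2\pi)}(z)/2)$, $k\in\mathbb Z$. $|\bm n|=\sum_j n_j$; $\operatorname{span}\{z^p\}_{p=a}^b$ ($b-a\in\mathbb Z$) is the span of $z^a,\dots,z^b$. $\bm n$ is $\phi$-normal if there is a unique $\phi\in\operatorname{span}\{z^p\}_{p=-|\bm n|/2}^{|\bm n|/2}$ with coefficient of $z^{|\bm n|/2}$ equal to $1$ and $\int\phi(z)z^{-p}\,d\mu_j(z)=0$ for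 $p=-n_j/2,\dots,n_j/2-1$, all $j$. A $\tau$-invariant paraorthogonal function for $\bm n$ is any $X\in\operatorname{span}\{z^p\}_{p=-(|\bm n|+1)/2}^{(|\bm n|+1)/2}$ with $X(z)=\tau\overline{X(1/\bar z)}$ and $\int X(z)z^{-p}\,d\mu_j(z)=0$ for $p=-(n_j-1)/2,\dots,(n_j-1)/2$, $j=1,\dots,r$. *)

theory Defs
  imports "HOL-Analysis.Analysis" "HOL-Computational_Algebra.Polynomial"
begin

definition argt :: "real \<Rightarrow> complex \<Rightarrow> real" where
  "argt t0 z = t0 + 2 * pi * frac ((Arg z - t0) / (2 * pi))"

text \<open>The branch z^(k/2) = |z|^(k/2) exp(i k arg_[t0,t0+2pi)(z) / 2).\<close>
definition halfpow :: "real \<Rightarrow> int \<Rightarrow> complex \<Rightarrow> complex" where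
  "halfpow t0 k z = complex_of_real (norm z powr (real_of_int k / 2))
                    * exp (\<i> * complex_of_real (real_of_int k * argt t0 z / 2))"

text \<open>Element of span of z^p, p = -N/2, -N/2+1, ..., N/2, with coefficient list cs
  (cs ! i is the coefficient of z^((2i-N)/2)).\<close>
definition span_eval :: "real \<Rightarrow> nat \<Rightarrow> complex list \<Rightarrow> complex \<Rightarrow> complex" where
  "span_eval t0 N cs z = (\<Sum>i\<le>N. cs ! i * halfpow t0 (2 * int i - int N) z)"

definition arc_cl :: "real \<Rightarrow> real \<Rightarrow> complex set" where
  "arc_cl a b = cis ` {a..b}"

definition arc_int :: "real \<Rightarrow> real \<Rightarrow> complex set" where
  "arc_int a b = cis ` {a<..<b}"

definition msupp :: "complex measure \<Rightarrow> complex set" where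
  "msupp M = {z. \<forall>e>0. emeasure M (ball z e) \<noteq> 0}"

definition angelesco_circle ::
  "nat \<Rightarrow> real \<Rightarrow> (nat \<Rightarrow> real) \<Rightarrow> (nat \<Rightarrow> real) \<Rightarrow> (nat \<Rightarrow> complex measure) \<Rightarrow> bool" where
  "angelesco_circle r t0 a b \<mu> \<longleftrightarrow>
     0 < r \<and>
     t0 \<le> a 0 \<and> b (r - 1) \<le> t0 + 2 * pi \<and>
     (\<forall>j<r. a j < b j \<and> b j - a j < 2 * pi) \<and>
     (\<forall>j. Suc j < r \<longrightarrow> b j \<le> a (Suc j)) \<and>
     (\<forall>j<r. sets (\<mu> j) = sets borel \<and> emeasure (\<mu> j) (space (\<mu> j)) < \<infinity>
            \<and> infinite (msupp (\<mu> j)) \<and> msupp (\<mu> j) \<subseteq> arc_cl (a j) (b j)) \<and>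
     emeasure (\<mu> (r - 1)) {cis t0} = 0"

definition ntotal :: "nat \<Rightarrow> (nat \<Rightarrow> nat) \<Rightarrow> nat" where
  "ntotal r n = (\<Sum>j<r. n j)"

definition phi_normal :: "nat \<Rightarrow> real \<Rightarrow> (nat \<Rightarrow> complex measure) \<Rightarrow> (nat \<Rightarrow> nat) \<Rightarrow> bool" where
  "phi_normal r t0 \<mu> n \<longleftrightarrow>
     (\<exists>!cs. length cs = ntotal r n + 1 \<and> cs ! (ntotal r n) = 1 \<and>
        (\<forall>j<r. \<forall>k<n j.
           (\<integral>z. span_eval t0 (ntotal r n) cs z * halfpow t0 (int (n j) - 2 * int k) z \<partial>(\<mu> j)) = 0))"

definition paraorth :: "nat \<Rightarrow> real \<Rightarrow> (nat \<Rightarrow> complex measure) \<Rightarrow> (nat \<Rightarrow> nat) \<Rightarrow> complex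
     \<Rightarrow> (complex \<Rightarrow> complex) \<Rightarrow> bool" where
  "paraorth r t0 \<mu> n \<tau> X \<longleftrightarrow>
     (\<exists>cs. length cs = ntotal r n + 2 \<and> (\<forall>z. z \<noteq> 0 \<longrightarrow> X z = span_eval t0 (ntotal r n + 1) cs z)) \<and>
     (\<forall>z. z \<noteq> 0 \<longrightarrow> X z = \<tau> * cnj (X (1 / cnj z))) \<and>
     (\<forall>j<r. \<forall>k<n j.
        (\<integral>z. X z * halfpow t0 (int (n j) - 1 - 2 * int k) z \<partial>(\<mu> j)) = 0)"

end

theory Submission
  imports Defs "HOL-Computational_Algebra.Fundamental_Theorem_Algebra"
begin


lemma cis_eq_imp: "cis x = cis y \<Longrightarrow> \<exists>k::int. x = y + 2*pi * k"
  using sin_cos_eq_iff[of x y] by (simp add: complex_eq_iff)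

lemma cis_add_int: "cis (x + 2*pi * of_int k) = cis x"
  by (metis cis.sel(1) cis.sel(2) complex.expand sin_cos_eq_iff)

lemma cis_inj_interval:
  assumes "cis x = cis y" "\<bar>x - y\<bar> < 2*pi" shows "x = y"
proof -
  obtain k :: int where k: "x = y + 2*pi * k" using cis_eq_imp[OF assms(1)] by blast
  then have "\<bar>2*pi * k\<bar> < 2*pi" using assms(2) by simp
  then have "\<bar>real_of_int k\<bar> < 1" by (simp add: abs_mult)
  then have "k = 0" by linarith
  then show ?thesis using k by simp
qed

lemma argt_bounds: "t0 \<le> argt t0 z" "argt t0 z < t0 + 2*pi"
  unfolding argt_def using frac_ge_0 frac_lt_1
  by (auto simp: mult_less_cancel_left_pos)

lemma argt_alt: "argt t0 z = Arg z - 2*pi * of_int \<lfloor>(Arg z - t0) / (2*pi)\<rfloor>"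
  unfolding argt_def frac_def by (simp add: field_simps)

lemma cis_argt: "cis (argt t0 z) = cis (Arg z)"
  unfolding argt_alt using cis_add_int[of "Arg z" "- \<lfloor>(Arg z - t0) / (2*pi)\<rfloor>"]
  by (simp add: algebra_simps)

lemma cis_Arg_unit: "norm z = 1 \<Longrightarrow> cis (Arg z) = z"
  by (metis Arg_eq cis_conv_exp complex_of_real_def mult_1 norm_zero one_complex.code zero_neq_one)

lemma cis_argt_unit: "norm z = 1 \<Longrightarrow> cis (argt t0 z) = z"
  by (simp add: cis_argt cis_Arg_unit)

lemma argt_cis: assumes "t0 \<le> th" "th < t0 + 2*pi" shows "argt t0 (cis th) = th"
proof -
  have "cis (argt t0 (cis th)) = cis th" by (simp add: cis_argt_unit)
  moreover have "\<bar>argt t0 (cis th) - th\<bar> < 2*pi" using argt_bounds[of t0 "cis th"] assms by auto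
  ultimately show ?thesis using cis_inj_interval by blast
qed

lemma argt_cis_int: "\<exists>k::int. argt t0 (cis th) = th + 2*pi * k"
  using cis_eq_imp[of "argt t0 (cis th)" th] by (simp add: cis_argt_unit)

lemma halfpow_unit: "norm z = 1 \<Longrightarrow> halfpow t0 k z = cis (of_int k * argt t0 z / 2)"
  unfolding halfpow_def by (simp add: cis_conv_exp)



lemma cis_diff_factor:
  "cis th - cis be = \<i> * cis ((th + be)/2) * complex_of_real (2 * sin ((th - be)/2))"
proof -
  have m: "sin ((be - th)/2) = - sin ((th - be)/2)"
    by (metis minus_diff_eq minus_divide_left sin_minus)
  have c: "cos th - cos be = - (2 * sin ((th - be)/2)) * sin ((th + be)/2)"
    using cos_diff_cos[of th be] m by (simp add: algebra_simps)
  have s: "sin th - sin be = 2 * sin ((th - be)/2) * cos ((th + be)/2)"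
    using sin_diff_sin[of th be] by simp
  show ?thesis using c s by (simp add: complex_eq_iff algebra_simps)
qed

lemma beta_exists:
  assumes "norm u = 1" shows "\<exists>be. a < be \<and> be \<le> a + 2*pi \<and> cis be = u"
proof -
  define be where "be = a + 2*pi - 2*pi*frac ((a - Arg u)/(2*pi))"
  define k :: int where "k = 1 + \<lfloor>(a - Arg u)/(2*pi)\<rfloor>"
  have "be = Arg u + 2*pi * of_int k"
    unfolding be_def frac_def k_def by (simp add: field_simps)
  then have "cis be = cis (Arg u)" using cis_add_int by metis
  also have "\<dots> = u" using assms by (simp add: cis_Arg_unit)
  finally have 1: "cis be = u" .
  have "a < be" "be \<le> a + 2*pi" unfolding be_def using frac_ge_0 frac_lt_1
    by (auto simp: mult_less_cancel_left_pos)
  with 1 show ?thesis by blast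
qed

lemma sin_half_nonpos:
  assumes "a \<le> th" "th \<le> b" "b \<le> be" "be \<le> a + 2*pi"
  shows "sin ((th - be)/2) \<le> 0"
proof -
  have "0 \<le> sin ((be - th)/2)" using assms by (intro sin_ge_zero) auto
  moreover have "sin ((be - th)/2) = - sin ((th - be)/2)"
    by (metis minus_diff_eq minus_divide_left sin_minus)
  ultimately show ?thesis by simp
qed

lemma sin_half_neg:
  assumes "a \<le> th" "th \<le> b" "b < be" "be < a + 2*pi"
  shows "sin ((th - be)/2) < 0"
proof -
  have "0 < sin ((be - th)/2)" using assms by (intro sin_gt_zero) auto
  moreover have "sin ((be - th)/2) = - sin ((th - be)/2)"
    by (metis minus_diff_eq minus_divide_left sin_minus)
  ultimately show ?thesis by simp
qed

lemma sin_half_zero_imp: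
  "sin ((th - be)/2) = 0 \<Longrightarrow> cis th = cis be"
  using cis_diff_factor[of th be] by simp

lemma poly_decomp_point:
  fixes P :: "complex poly"
  shows "poly P x = lead_coeff P * (\<Prod>u|poly P u = 0. (x - u) ^ order u P)"
proof -
  have "poly P x = poly (smult (lead_coeff P) (\<Prod>z|poly P z = 0. [:-z, 1:] ^ order z P)) x"
    by (simp only: complex_poly_decompose)
  also have "\<dots> = lead_coeff P * (\<Prod>u|poly P u = 0. (x - u) ^ order u P)"
    by (simp add: poly_prod poly_power)
  finally show ?thesis .
qed

lemma ivt_sign:
  fixes y :: "real \<Rightarrow> real"
  assumes "continuous_on {a..b} y" "\<And>t. t \<in> {a..b} \<Longrightarrow> y t \<noteq> 0" "a \<le> b"
  shows "\<exists>s::real. (s = 1 \<or> s = -1) \<and> (\<forall>t\<in>{a..b}. s * y t > 0)"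
proof (cases "y a > 0")
  case True
  have "y t > 0" if t: "t \<in> {a..b}" for t
  proof (rule ccontr)
    assume "\<not> y t > 0"
    then have "y t \<le> 0" by simp
    then obtain x where "a \<le> x" "x \<le> t" "y x = 0"
      using IVT2'[of y t 0 a] True t continuous_on_subset[OF assms(1), of "{a..t}"] by force
    then show False using assms(2)[of x] t by auto
  qed
  then show ?thesis by (intro exI[of _ 1]) auto
next
  case False
  then have ya: "y a < 0" using assms(2)[of a] assms(3) by force
  have "y t < 0" if t: "t \<in> {a..b}" for t
  proof (rule ccontr)
    assume "\<not> y t < 0"
    then have "y t \<ge> 0" by simp
    then obtain x where "a \<le> x" "x \<le> t" "y x = 0"
      using IVT'[of y a 0 t] ya t continuous_on_subset[OF assms(1), of "{a..t}"] by force
    then show False using assms(2)[of x] t by auto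
  qed
  then show ?thesis by (intro exI[of _ "-1"]) auto
qed



lemma core_sign:
  fixes P Q :: "complex poly" and M D :: nat and lam :: complex and a b ga :: real
  assumes P0: "P \<noteq> 0" and lam1: "norm lam = 1"
    and inv: "\<And>th. cis (- (real M * th / 2)) * poly P (cis th)
                 = lam * cnj (cis (- (real M * th / 2)) * poly P (cis th))"
    and ab: "a < b" "b - a < 2*pi" and ga: "b < ga" "ga < a + 2*pi"
    and W_def: "W = {w \<in> cis ` {a<..<b}. poly P w = 0 \<and> odd (order w P)}"
    and DW: "card W \<le> D"
    and Q_def: "Q = (\<Prod>w\<in>W. [:-w,1:]) * [:-cis ga,1:]^(D - card W)"
  shows "\<exists>\<kappa>. \<forall>th\<in>{a..b}.
     Im (\<kappa> * (cis (- (real M * th / 2)) * poly P (cis th)) * cnj (cis (- (real D * th / 2)) * poly Q (cis th))) = 0 \<and>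
     Re (\<kappa> * (cis (- (real M * th / 2)) * poly P (cis th)) * cnj (cis (- (real D * th / 2)) * poly Q (cis th))) \<ge> 0 \<and>
     (poly P (cis th) \<noteq> 0 \<longrightarrow>
       Re (\<kappa> * (cis (- (real M * th / 2)) * poly P (cis th)) * cnj (cis (- (real D * th / 2)) * poly Q (cis th))) > 0)"
proof -
  define v where "v th = cis (- (real M * th / 2)) * poly P (cis th)" for th
  define Z where "Z = {u. poly P u = 0}"
  have finZ: "finite Z" using poly_roots_finite[OF P0] Z_def by simp
  define Zc where "Zc = {u\<in>Z. norm u = 1}"
  define Zo where "Zo = {u\<in>Z. norm u \<noteq> 1}"
  have finZc: "finite Zc" "finite Zo" using finZ Zc_def Zo_def by auto
  have ZU: "Z = Zc \<union> Zo" "Zc \<inter> Zo = {}" using Zc_def Zo_def by auto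
  define m where "m u = order u P" for u
  define L where "L = lead_coeff P"
  have L0: "L \<noteq> 0" using P0 L_def by simp
  define be where "be u = (SOME t. a < t \<and> t \<le> a + 2*pi \<and> cis t = u)" for u
  have be: "a < be u \<and> be u \<le> a + 2*pi \<and> cis (be u) = u" if "norm u = 1" for u
    unfolding be_def by (rule someI_ex[OF beta_exists[OF that]])
  define sf where "sf u th = 2 * sin ((th - be u)/2)" for u th
  have fact_c: "cis th - u = \<i> * cis (be u / 2) * cis (th/2) * complex_of_real (sf u th)"
    if "norm u = 1" for u th
  proof -
    have "cis th - u = cis th - cis (be u)" using be[OF that] by simp
    also have "\<dots> = \<i> * cis ((th + be u)/2) * complex_of_real (sf u th)"
      unfolding sf_def by (rule cis_diff_factor)
    also have "cis ((th + be u)/2) = cis (be u / 2) * cis (th/2)"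
      by (simp add: cis_mult add_divide_distrib add.commute)
    finally show ?thesis by (simp add: mult.assoc)
  qed
  define K where "K = (\<Sum>u\<in>Zc. m u)"
  define OmP where "OmP = (\<Prod>u\<in>Zc. (\<i> * cis (be u / 2)) ^ m u)"
  define SP where "SP th = (\<Prod>u\<in>Zc. sf u th ^ m u)" for th
  define h where "h th = L * OmP * cis ((real K - real M) * th / 2) * (\<Prod>u\<in>Zo. (cis th - u) ^ m u)" for th
  have Acirc: "(\<Prod>u\<in>Zc. (cis th - u) ^ m u) = OmP * cis (real K * th / 2) * complex_of_real (SP th)" for th
  proof -
    have "(\<Prod>u\<in>Zc. (cis th - u) ^ m u)
        = (\<Prod>u\<in>Zc. (\<i> * cis (be u / 2)) ^ m u * (cis (th/2) ^ m u * complex_of_real (sf u th ^ m u)))"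
      by (rule prod.cong) (auto simp: fact_c Zc_def power_mult_distrib)
    also have "\<dots> = OmP * ((\<Prod>u\<in>Zc. cis (th/2) ^ m u) * (\<Prod>u\<in>Zc. complex_of_real (sf u th ^ m u)))"
      by (simp add: prod.distrib OmP_def)
    also have "(\<Prod>u\<in>Zc. cis (th/2) ^ m u) = cis (th/2) ^ K" by (simp add: K_def power_sum)
    also have "\<dots> = cis (real K * th / 2)" using Complex.DeMoivre[of "th/2" K] by simp
    also have "(\<Prod>u\<in>Zc. complex_of_real (sf u th ^ m u)) = complex_of_real (SP th)"
      by (simp add: SP_def)
    finally show ?thesis by (simp add: mult.assoc)
  qed
  have v_eq: "v th = h th * complex_of_real (SP th)" for th
  proof -
    have "poly P (cis th) = L * (\<Prod>u\<in>Z. (cis th - u) ^ m u)"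
      using poly_decomp_point[of P "cis th"] by (simp add: L_def m_def Z_def)
    also have "(\<Prod>u\<in>Z. (cis th - u) ^ m u) = (\<Prod>u\<in>Zc. (cis th - u) ^ m u) * (\<Prod>u\<in>Zo. (cis th - u) ^ m u)"
      using ZU finZc by (simp add: prod.union_disjoint)
    finally have "poly P (cis th) = L * (OmP * cis (real K * th / 2) * complex_of_real (SP th)) * (\<Prod>u\<in>Zo. (cis th - u) ^ m u)"
      by (simp add: Acirc mult.assoc)
    moreover have "cis (- (real M * th / 2)) * cis (real K * th / 2) = cis ((real K - real M) * th / 2)"
      by (simp add: cis_mult algebra_simps diff_divide_distrib)
    ultimately show ?thesis unfolding v_def h_def
      by (metis (no_types, lifting) mult.assoc mult.commute mult.left_commute)
  qed
  have h_cont: "continuous_on UNIV h" unfolding h_def by (intro continuous_intros) auto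
  have OmP0: "OmP \<noteq> 0" unfolding OmP_def using finZc by (simp add: prod_zero_iff)
  have h0: "h th \<noteq> 0" for th
  proof -
    have "cis th - u \<noteq> 0" if "u \<in> Zo" for u using that by (auto simp: Zo_def)
    then show ?thesis unfolding h_def using L0 OmP0 finZc by (simp add: prod_zero_iff)
  qed
  have SP0: "SP th \<noteq> 0" if "cis th \<notin> Zc" for th
  proof -
    have "sf u th \<noteq> 0" if "u \<in> Zc" for u
    proof
      assume "sf u th = 0"
      then have "cis th = cis (be u)" using sin_half_zero_imp[of th "be u"] by (simp add: sf_def)
      then show False using be[of u] that \<open>cis th \<notin> Zc\<close> by (auto simp: Zc_def)
    qed
    then show ?thesis unfolding SP_def using finZc by (simp add: prod_zero_iff)
  qed
  have hinv1: "h th = lam * cnj (h th)" if "cis th \<notin> Zc" for th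
  proof -
    have "h th * complex_of_real (SP th) = lam * cnj (h th) * complex_of_real (SP th)"
      using inv[of th] v_eq[of th] unfolding v_def by simp
    then show ?thesis using SP0[OF that] by simp
  qed
  have hinv: "h th = lam * cnj (h th)" for th
  proof (rule ccontr)
    assume H: "h th \<noteq> lam * cnj (h th)"
    define g where "g t = h t - lam * cnj (h t)" for t
    have "continuous_on UNIV g" unfolding g_def by (intro continuous_intros h_cont)
    then have "continuous (at th) g" by (simp add: continuous_on_eq_continuous_at)
    moreover have "g th \<noteq> 0" using H g_def by simp
    ultimately obtain e where e: "e > 0" "\<And>y. dist th y < e \<Longrightarrow> g y \<noteq> 0"
      using continuous_at_avoid by blast
    define I where "I = {th <..< th + min e pi}"
    have infI: "infinite I" unfolding I_def using e by simp
    have "inj_on cis I"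
    proof
      fix x y assume "x \<in> I" "y \<in> I" "cis x = cis y"
      then show "x = y" using cis_inj_interval[of x y] by (auto simp: I_def)
    qed
    then have "finite (cis -` Zc \<inter> I)" using finZc by (intro finite_vimage_IntI)
    then have "infinite (I - (cis -` Zc \<inter> I))" using infI by (simp add: Diff_infinite_finite)
    then obtain y where y: "y \<in> I" "cis y \<notin> Zc" by (metis Diff_iff IntI finite.emptyI vimageI2 ex_in_conv)
    have "dist th y < e" using y(1) by (auto simp: I_def dist_real_def)
    then have "g y \<noteq> 0" using e by blast
    moreover have "g y = 0" using hinv1[OF y(2)] g_def by simp
    ultimately show False by simp
  qed

  define sig where "sig = csqrt lam"
  have sig2: "sig * sig = lam" using power2_csqrt[of lam] by (simp add: sig_def power2_eq_square)
  have sign: "norm sig = 1" using lam1 by (simp add: sig_def)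
  have sigc: "cnj sig * sig = 1"
  proof -
    have "sig * cnj sig = complex_of_real ((norm sig)^2)" by (rule complex_norm_square[symmetric])
    then show ?thesis using sign by (simp add: mult.commute)
  qed
  define y where "y th = Re (h th / sig)" for th
  have hy: "h th / sig = complex_of_real (y th)" for th
  proof -
    define t where "t = h th / sig"
    have sig0: "sig \<noteq> 0" using sign by auto
    have ht: "h th = sig * t" using sig0 t_def by simp
    have "sig * t = sig * sig * (cnj sig * cnj t)" using hinv[of th] ht sig2 by simp
    then have "t = sig * (cnj sig * cnj t)" using sig0 by (simp add: mult.assoc)
    also have "\<dots> = cnj t" using sigc by (simp add: mult.assoc[symmetric] mult.commute)
    finally have "Im t = 0" by (metis complex_cnj_cancel_iff Reals_cnj_iff complex_is_Real_iff)
    then show ?thesis unfolding y_def t_def by (simp add: complex_eq_iff)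
  qed
  have y_cont: "continuous_on {a..b} y" unfolding y_def
    by (intro continuous_intros continuous_on_subset[OF h_cont]) (use sign in auto)
  have y0: "y th \<noteq> 0" for th using hy[of th] h0[of th] sign by auto
  obtain s0 :: real where s0: "s0 = 1 \<or> s0 = -1" "\<And>th. th \<in> {a..b} \<Longrightarrow> s0 * y th > 0"
    using ivt_sign[OF y_cont _ less_imp_le[OF ab(1)]] y0 by blast

  have WZc: "W \<subseteq> Zc" unfolding W_def Zc_def Z_def by auto
  have finW: "finite W" using finite_subset[OF WZc finZc(1)] .
  have beW: "be w \<in> {a<..<b}" if wW: "w \<in> W" for w
  proof -
    obtain t where t: "t \<in> {a<..<b}" "w = cis t" using wW W_def by auto
    have n1: "norm w = 1" using t by simp
    have "be w = t" using be[OF n1] t ab by (intro cis_inj_interval) auto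
    then show ?thesis using t by simp
  qed
  define md where "md = D - card W"
  define sg where "sg th = 2 * sin ((th - ga)/2)" for th
  define OmQ where "OmQ = (\<Prod>w\<in>W. \<i> * cis (be w / 2)) * (\<i> * cis (ga/2)) ^ md"
  define TQ where "TQ th = (\<Prod>w\<in>W. sf w th) * sg th ^ md" for th
  have OmQ0: "OmQ \<noteq> 0" unfolding OmQ_def using finW by (simp add: prod_zero_iff)
  have wq: "cis (- (real D * th / 2)) * poly Q (cis th) = OmQ * complex_of_real (TQ th)" for th
  proof -
    have pq: "poly Q (cis th) = (\<Prod>w\<in>W. cis th - w) * (cis th - cis ga) ^ md"
      unfolding Q_def md_def by (simp add: poly_prod poly_power)
    have p1: "(\<Prod>w\<in>W. cis th - w) = (\<Prod>w\<in>W. \<i> * cis (be w / 2)) * cis (th/2) ^ card W * complex_of_real (\<Prod>w\<in>W. sf w th)"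
    proof -
      have "(\<Prod>w\<in>W. cis th - w) = (\<Prod>w\<in>W. (\<i> * cis (be w / 2)) * (cis (th/2) * complex_of_real (sf w th)))"
        by (rule prod.cong) (use WZc in \<open>auto simp: fact_c Zc_def mult.assoc\<close>)
      also have "\<dots> = (\<Prod>w\<in>W. \<i> * cis (be w / 2)) * (cis (th/2) ^ card W * complex_of_real (\<Prod>w\<in>W. sf w th))"
        by (simp add: prod.distrib)
      finally show ?thesis by (simp add: mult.assoc)
    qed
    have p2: "(cis th - cis ga) ^ md = (\<i> * cis (ga/2)) ^ md * cis (th/2) ^ md * complex_of_real (sg th ^ md)"
    proof -
      have e: "cis th - cis ga = \<i> * cis (ga/2) * cis (th/2) * complex_of_real (sg th)"
        using cis_diff_factor[of th ga]
        by (simp add: sg_def cis_mult add_divide_distrib add.commute mult.assoc)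
      show ?thesis unfolding e by (simp only: power_mult_distrib of_real_power)
    qed
    have p3: "cis (th/2) ^ card W * cis (th/2) ^ md = cis (real D * th / 2)"
    proof -
      have "card W + md = D" using DW md_def by simp
      then have "cis (th/2) ^ card W * cis (th/2) ^ md = cis (th/2) ^ D" by (metis power_add)
      also have "\<dots> = cis (real D * th / 2)" using Complex.DeMoivre[of "th/2" D] by simp
      finally show ?thesis .
    qed
    have p4: "cis (- (real D * th / 2)) * cis (real D * th / 2) = 1" by (simp add: cis_mult)
    have "cis (- (real D * th / 2)) * poly Q (cis th)
       = OmQ * complex_of_real (TQ th) * (cis (- (real D * th / 2)) * (cis (th/2) ^ card W * cis (th/2) ^ md))"
      unfolding pq p1 p2 OmQ_def TQ_def by (simp add: algebra_simps)
    then show ?thesis using p3 p4 by simp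
  qed

  define e where "e u = m u + (if u \<in> W then 1 else 0)" for u
  define epu where "epu u = (if be u < b then 1 else (-1::real) ^ e u)" for u
  define eps where "eps = (\<Prod>u\<in>Zc. epu u) * (-1::real) ^ md"
  have STeq: "SP th * TQ th = (\<Prod>u\<in>Zc. sf u th ^ e u) * sg th ^ md" for th
  proof -
    have "(\<Prod>w\<in>W. sf w th) = (\<Prod>u\<in>Zc. if u \<in> W then sf u th else 1)"
    proof -
      have "W = {u \<in> Zc. u \<in> W}" using WZc by auto
      then have "(\<Prod>w\<in>W. sf w th) = (\<Prod>u\<in>{u \<in> Zc. u \<in> W}. sf u th)" by simp
      also have "\<dots> = (\<Prod>u\<in>Zc. if u \<in> W then sf u th else 1)"
        using finZc(1) by (rule prod.inter_filter)
      finally show ?thesis .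
    qed
    then have "SP th * TQ th = (\<Prod>u\<in>Zc. sf u th ^ m u * (if u \<in> W then sf u th else 1)) * sg th ^ md"
      unfolding SP_def TQ_def by (simp add: prod.distrib mult.assoc)
    also have "(\<Prod>u\<in>Zc. sf u th ^ m u * (if u \<in> W then sf u th else 1)) = (\<Prod>u\<in>Zc. sf u th ^ e u)"
      by (rule prod.cong) (auto simp: e_def)
    finally show ?thesis .
  qed
  have facnn: "epu u * sf u th ^ e u \<ge> 0" if u: "u \<in> Zc" and th: "th \<in> {a..b}" for u th
  proof (cases "be u < b")
    case True
    have n1: "norm u = 1" using u Zc_def by simp
    have uin: "u \<in> cis ` {a<..<b}" using be[OF n1] True by (metis greaterThanLessThan_iff image_eqI)
    have pu: "poly P u = 0" using u Zc_def Z_def by simp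
    have "even (e u)"
    proof (cases "u \<in> W")
      case True
      then have "odd (m u)" using W_def m_def by simp
      then show ?thesis using True e_def by simp
    next
      case False
      then have "even (m u)" using W_def m_def uin pu by auto
      then show ?thesis using False e_def by simp
    qed
    then show ?thesis using True epu_def by (simp add: zero_le_even_power)
  next
    case False
    have n1: "norm u = 1" using u Zc_def by simp
    have "sin ((th - be u)/2) \<le> 0" using be[OF n1] False th by (intro sin_half_nonpos[of a th b]) auto
    then have "0 \<le> (- sf u th) ^ e u" by (simp add: sf_def)
    also have "(- sf u th) ^ e u = (-1) ^ e u * sf u th ^ e u"
      by (metis mult_minus1 power_mult_distrib)
    finally show ?thesis using False epu_def by simp
  qed
  have facpos: "epu u * sf u th ^ e u > 0" if u: "u \<in> Zc" and th: "th \<in> {a..b}" and pz: "poly P (cis th) \<noteq> 0" for u th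
  proof -
    have n1: "norm u = 1" using u Zc_def by simp
    have "sf u th \<noteq> 0"
    proof
      assume "sf u th = 0"
      then have "cis th = u" using sin_half_zero_imp[of th "be u"] be[OF n1] by (simp add: sf_def)
      then show False using pz u Zc_def Z_def by simp
    qed
    moreover have "epu u \<noteq> 0" using epu_def by simp
    ultimately have "epu u * sf u th ^ e u \<noteq> 0" by simp
    then show ?thesis using facnn[OF u th] by linarith
  qed
  have sgpos: "(-1::real) ^ md * sg th ^ md > 0" if th: "th \<in> {a..b}" for th
  proof -
    have "sin ((th - ga)/2) < 0" using ga th by (intro sin_half_neg[of a th b]) auto
    then have "0 < (- sg th) ^ md" by (simp add: sg_def)
    also have "(- sg th) ^ md = (-1) ^ md * sg th ^ md"
      by (metis mult_minus1 power_mult_distrib)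
    finally show ?thesis .
  qed
  have ST: "eps * (SP th * TQ th) = (\<Prod>u\<in>Zc. epu u * sf u th ^ e u) * ((-1) ^ md * sg th ^ md)" for th
    unfolding STeq eps_def by (simp add: prod.distrib algebra_simps)
  have STnn: "eps * (SP th * TQ th) \<ge> 0" if "th \<in> {a..b}" for th
  proof -
    have "(\<Prod>u\<in>Zc. epu u * sf u th ^ e u) \<ge> 0" by (rule prod_nonneg) (use facnn[OF _ that] in auto)
    then show ?thesis unfolding ST using sgpos[OF that] by simp
  qed
  have STpos: "eps * (SP th * TQ th) > 0" if "th \<in> {a..b}" "poly P (cis th) \<noteq> 0" for th
  proof -
    have "(\<Prod>u\<in>Zc. epu u * sf u th ^ e u) > 0" by (rule prod_pos) (use facpos[OF _ that] in auto)
    then show ?thesis unfolding ST using sgpos[OF that(1)] by simp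
  qed
  define kap where "kap = cnj sig * OmQ * complex_of_real (s0 * eps)"
  have rho: "kap * (cis (- (real M * th / 2)) * poly P (cis th)) * cnj (cis (- (real D * th / 2)) * poly Q (cis th))
     = complex_of_real ((norm OmQ)^2 * (s0 * y th) * (eps * (SP th * TQ th)))" for th
  proof -
    have V: "cis (- (real M * th / 2)) * poly P (cis th) = sig * complex_of_real (y th) * complex_of_real (SP th)"
      using v_eq[of th] hy[of th] sign unfolding v_def
      by (metis mult.commute nonzero_eq_divide_eq norm_zero zero_neq_one)
    have O: "OmQ * cnj OmQ = complex_of_real ((norm OmQ)^2)" by (rule complex_norm_square[symmetric])
    have c: "cnj (OmQ * complex_of_real (TQ th)) = cnj OmQ * complex_of_real (TQ th)" by simp
    have "kap * (cis (- (real M * th / 2)) * poly P (cis th)) * cnj (cis (- (real D * th / 2)) * poly Q (cis th))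
       = (cnj sig * sig) * (OmQ * cnj OmQ) * (complex_of_real (s0 * eps) * complex_of_real (y th) * complex_of_real (SP th) * complex_of_real (TQ th))"
      unfolding kap_def wq V c by algebra
    also have "\<dots> = complex_of_real ((norm OmQ)^2 * (s0 * y th) * (eps * (SP th * TQ th)))"
      unfolding sigc O by (simp add: algebra_simps)
    finally show ?thesis .
  qed
  show ?thesis
  proof (intro exI[of _ kap] ballI conjI impI)
    fix th assume th: "th \<in> {a..b}"
    have nO: "(norm OmQ)^2 > 0" using OmQ0 by simp
    show "Im (kap * (cis (- (real M * th / 2)) * poly P (cis th)) * cnj (cis (- (real D * th / 2)) * poly Q (cis th))) = 0"
      unfolding rho by simp
    show "Re (kap * (cis (- (real M * th / 2)) * poly P (cis th)) * cnj (cis (- (real D * th / 2)) * poly Q (cis th))) \<ge> 0"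
      unfolding rho using nO s0(2)[OF th] STnn[OF th]
      by (simp add: less_imp_le[OF nO] less_imp_le[OF s0(2)[OF th]])
    assume pz: "poly P (cis th) \<noteq> 0"
    show "Re (kap * (cis (- (real M * th / 2)) * poly P (cis th)) * cnj (cis (- (real D * th / 2)) * poly Q (cis th))) > 0"
      unfolding rho using nO s0(2)[OF th] STpos[OF th pz] by simp
  qed
qed


lemma msupp_null:
  fixes M :: "complex measure"
  assumes sM: "sets M = sets borel"
  shows "- msupp M \<in> null_sets M"
proof -
  define F where "F = {ball z e | z e. e > 0 \<and> emeasure M (ball z e) = 0}"
  have openF: "\<And>S. S \<in> F \<Longrightarrow> open S" unfolding F_def by auto
  obtain F' where F': "F' \<subseteq> F" "countable F'" "\<Union>F' = \<Union>F" using Lindelof[OF openF] by metis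
  have eq: "- msupp M = \<Union>F"
  proof
    show "- msupp M \<subseteq> \<Union>F"
    proof
      fix z assume "z \<in> - msupp M"
      then obtain e where "e > 0" "emeasure M (ball z e) = 0" unfolding msupp_def by auto
      then have "ball z e \<in> F" "z \<in> ball z e" unfolding F_def by auto
      then show "z \<in> \<Union>F" by blast
    qed
    show "\<Union>F \<subseteq> - msupp M"
    proof
      fix w assume "w \<in> \<Union>F"
      then obtain z e where ze: "e > 0" "emeasure M (ball z e) = 0" "w \<in> ball z e" unfolding F_def by auto
      define d where "d = e - dist z w"
      have d0: "d > 0" using ze(3) d_def by simp
      have "ball w d \<subseteq> ball z e"
      proof
        fix x assume "x \<in> ball w d"
        then have "dist w x < d" by simp
        then show "x \<in> ball z e" using dist_triangle[of z x w] d_def by simp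
      qed
      then have "emeasure M (ball w d) \<le> emeasure M (ball z e)" by (rule emeasure_mono) (simp add: sM)
      then have "emeasure M (ball w d) = 0" using ze(2) by simp
      then show "w \<in> - msupp M" unfolding msupp_def using d0 by auto
    qed
  qed
  have "(\<Union>S\<in>F'. S) \<in> null_sets M"
    by (rule null_sets_UN') (use F' in \<open>auto simp: F_def null_sets_def sM\<close>)
  then show ?thesis using eq F' by simp
qed

lemma Arg_measurable[measurable]: "Arg \<in> borel_measurable borel"
proof -
  define A where "A = - (\<real>\<^sub>\<le>\<^sub>0 :: complex set)"
  have Ab: "A \<in> sets borel" unfolding A_def by (intro borel_open) (simp add: open_Compl)
  have f1: "(\<lambda>z. if z \<in> A then Arg z else 0) \<in> borel_measurable borel"
    by (rule borel_measurable_continuous_on_if[OF Ab]) (auto simp: A_def continuous_on_Arg continuous_on_const)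
  have g: "(\<lambda>z::complex. if z \<in> {0} then 0 else pi) \<in> borel_measurable borel"
    by (rule measurable_If_set) auto
  have "(\<lambda>z. if z \<in> A then (if z \<in> A then Arg z else 0) else (if z \<in> {0} then 0 else pi)) \<in> borel_measurable borel"
    by (rule measurable_If_set[OF f1 g]) (simp add: Ab)
  moreover have "(\<lambda>z. if z \<in> A then (if z \<in> A then Arg z else 0) else (if z \<in> {0} then 0 else pi)) = Arg"
  proof
    fix z show "(if z \<in> A then (if z \<in> A then Arg z else 0) else (if z \<in> {0} then 0 else pi)) = Arg z"
    proof (cases "z \<in> A")
      case False
      then obtain r where r: "z = complex_of_real r" "r \<le> 0" unfolding A_def by (auto elim: nonpos_Reals_cases)
      then show ?thesis using False by (cases "r = 0") (auto simp: Arg_zero)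
    qed simp
  qed
  ultimately show ?thesis by simp
qed

lemma argt_measurable[measurable]: "argt t0 \<in> borel_measurable borel"
  unfolding argt_def[abs_def] frac_def by measurable

lemma halfpow_measurable[measurable]: "halfpow t0 k \<in> borel_measurable borel"
  unfolding halfpow_def[abs_def] by measurable

lemma span_eval_measurable[measurable]: "span_eval t0 N cs \<in> borel_measurable borel"
  unfolding span_eval_def[abs_def] by measurable



lemma chain_mono:
  assumes "\<forall>j<r. a j < (b j::real)" "\<forall>j. Suc j < r \<longrightarrow> b j \<le> a (Suc j)"
  shows "i \<le> k \<Longrightarrow> k < r \<Longrightarrow> a i \<le> a k \<and> b i \<le> b k"
proof (induction k)
  case 0 then show ?case by simp
next
  case (Suc k)
  show ?case
  proof (cases "i = Suc k")
    case False
    then have "i \<le> k" using Suc by simp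
    then have IH: "a i \<le> a k \<and> b i \<le> b k" using Suc by simp
    have "b k \<le> a (Suc k)" using assms(2) Suc by simp
    moreover have "a (Suc k) < b (Suc k)" "a k < b k" using assms(1) Suc by auto
    ultimately show ?thesis using IH by linarith
  qed simp
qed

lemma poly_sum_upto:
  fixes Q :: "complex poly"
  assumes "degree Q < K"
  shows "poly Q x = (\<Sum>i<K. coeff Q i * x ^ i)"
proof -
  have "poly Q x = (\<Sum>i\<le>degree Q. coeff Q i * x ^ i)" by (rule poly_altdef)
  also have "\<dots> = (\<Sum>i<K. coeff Q i * x ^ i)"
    by (rule sum.mono_neutral_left) (use assms in \<open>auto simp: coeff_eq_0\<close>)
  finally show ?thesis .
qed

lemma conj_q_expand:
  fixes Q :: "complex poly"
  assumes z: "norm z = 1" and dQ: "degree Q < K" and K: "K \<ge> 1"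
  shows "cnj (halfpow t0 (- (int K - 1)) z * poly Q z)
         = (\<Sum>i<K. cnj (coeff Q i) * halfpow t0 (int K - 1 - 2 * int i) z)"
proof -
  define A where "A = argt t0 z"
  have zA: "z = cis A" using cis_argt_unit[OF z] A_def by simp
  have h1: "halfpow t0 (- (int K - 1)) z = cis (- ((real K - 1) * A / 2))"
    by (simp add: halfpow_unit[OF z] A_def algebra_simps minus_divide_left)
  have p: "poly Q z = (\<Sum>i<K. coeff Q i * cis (real i * A))"
    using poly_sum_upto[OF dQ, of z] zA by (simp add: Complex.DeMoivre)
  have "cnj (halfpow t0 (- (int K - 1)) z * poly Q z)
      = cis ((real K - 1) * A / 2) * (\<Sum>i<K. cnj (coeff Q i) * cis (- (real i * A)))"
    unfolding h1 p by (simp add: cis_cnj)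
  also have "\<dots> = (\<Sum>i<K. cnj (coeff Q i) * cis ((real K - 1 - 2 * real i) * A / 2))"
    by (simp add: sum_distrib_left cis_mult algebra_simps diff_divide_distrib add_divide_distrib)
  also have "\<dots> = (\<Sum>i<K. cnj (coeff Q i) * halfpow t0 (int K - 1 - 2 * int i) z)"
    by (simp add: halfpow_unit[OF z] A_def)
  finally show ?thesis .
qed

lemma degree_Q:
  fixes W :: "complex set"
  assumes "finite W"
  shows "degree ((\<Prod>w\<in>W. [:-w,1:]) * [:-c,1:]^md) \<le> card W + md"
proof -
  have "degree (\<Prod>w\<in>W. [:-w,1:]) \<le> (\<Sum>w\<in>W. degree [:-w,1:])"
    using degree_prod_sum_le[OF assms, of "\<lambda>w. [:-w,1:]"] by (simp add: o_def)
  also have "\<dots> = card W" by simp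
  finally have 1: "degree (\<Prod>w\<in>W. [:-w,1:]) \<le> card W" .
  have 2: "degree ([:-c,1:]^md) \<le> md" using degree_power_le[of "[:-c,1:]" md] by simp
  show ?thesis using degree_mult_le[of "\<Prod>w\<in>W. [:-w,1:]" "[:-c,1:]^md"] 1 2 by linarith
qed

lemma halfpow_nonzero: "z \<noteq> 0 \<Longrightarrow> halfpow t0 k z \<noteq> 0"
  unfolding halfpow_def by simp



theorem theorem4p7:
  fixes r :: nat and t0 :: real and a b :: "nat \<Rightarrow> real"
    and \<mu> :: "nat \<Rightarrow> complex measure" and n :: "nat \<Rightarrow> nat"
    and \<tau> :: complex and X :: "complex \<Rightarrow> complex"
  assumes "angelesco_circle r t0 a b \<mu>"
    and "phi_normal r t0 \<mu> n"
    and "norm \<tau> = 1"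
    and "paraorth r t0 \<mu> n \<tau> X"
    and "\<exists>z. z \<noteq> 0 \<and> X z \<noteq> 0"
  shows "\<forall>j<r. \<forall>P :: complex poly.
           (\<forall>z. z \<noteq> 0 \<longrightarrow> poly P z = halfpow t0 (int (ntotal r n) + 1) z * X z) \<longrightarrow>
           n j \<le> card {w \<in> arc_int (a j) (b j). poly P w = 0 \<and> odd (order w P)}"
proof (intro allI impI)
  fix j and P :: "complex poly"
  assume j: "j < r" and hP: "\<forall>z. z \<noteq> 0 \<longrightarrow> poly P z = halfpow t0 (int (ntotal r n) + 1) z * X z"
  define N where "N = ntotal r n"
  define aj where "aj = a j"
  define bj where "bj = b j"
  define mu where "mu = \<mu> j"
  note ang = assms(1)[unfolded angelesco_circle_def]
  have abj: "aj < bj" "bj - aj < 2*pi" using ang j aj_def bj_def by auto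
  have sM: "sets mu = sets borel" and finM: "emeasure mu (space mu) < \<infinity>"
    and infS: "infinite (msupp mu)" and suppS: "msupp mu \<subseteq> arc_cl aj bj"
    using ang j by (auto simp: mu_def aj_def bj_def)
  have spM: "space mu = UNIV" using sets_eq_imp_space_eq[OF sM] by simp
  have mono: "\<And>i k. i \<le> k \<Longrightarrow> k < r \<Longrightarrow> a i \<le> a k \<and> b i \<le> b k"
    using chain_mono[of r a b] ang by blast
  have t0a: "t0 \<le> aj" using mono[of 0 j] j ang aj_def by auto
  have bt0: "bj \<le> t0 + 2*pi"
  proof -
    have "b j \<le> b (r-1)" using mono[of j "r-1"] j by simp
    then show ?thesis using ang bj_def by linarith
  qed
  have blast: "j = r - 1" if bjeq: "bj = t0 + 2*pi"
  proof (rule ccontr)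
    assume "j \<noteq> r - 1"
    then have sj: "Suc j < r" using j by simp
    then have "b j \<le> a (Suc j)" "a (Suc j) < b (Suc j)" "b (Suc j) \<le> b (r-1)"
      using ang mono[of "Suc j" "r-1"] by auto
    then show False using ang bjeq bj_def by linarith
  qed
  obtain cs where cs: "length cs = N + 2" "\<And>z. z \<noteq> 0 \<Longrightarrow> X z = span_eval t0 (N + 1) cs z"
    using assms(4) unfolding paraorth_def N_def by blast
  have Xinv: "\<And>z. z \<noteq> 0 \<Longrightarrow> X z = \<tau> * cnj (X (1 / cnj z))"
    using assms(4) unfolding paraorth_def by blast
  have orth: "\<And>k. k < n j \<Longrightarrow> (\<integral>z. X z * halfpow t0 (int (n j) - 1 - 2 * int k) z \<partial>mu) = 0"
    using assms(4) j unfolding paraorth_def mu_def by blast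
  define W where "W = {w \<in> arc_int aj bj. poly P w = 0 \<and> odd (order w P)}"
  show "n j \<le> card {w \<in> arc_int (a j) (b j). poly P w = 0 \<and> odd (order w P)}"
  proof (rule ccontr)
    assume "\<not> ?thesis"
    then have cardW: "card W < n j" unfolding W_def aj_def bj_def by simp
    obtain z0 where z0: "z0 \<noteq> 0" "X z0 \<noteq> 0" using assms(5) by blast
    have "poly P z0 \<noteq> 0" using hP z0 halfpow_nonzero[OF z0(1)] by simp
    then have P0: "P \<noteq> 0" by auto
    have finR: "finite {z. poly P z = 0}" using poly_roots_finite[OF P0] .
    have finW: "finite W" by (rule finite_subset[OF _ finR]) (auto simp: W_def)
    define D where "D = n j - 1"
    have nj1: "n j \<ge> 1" using cardW by simp
    have DW: "card W \<le> D" using cardW D_def by simp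
    define ga where "ga = (aj + bj)/2 + pi"
    have gab: "bj < ga" "ga < aj + 2*pi" using abj ga_def by (auto simp: field_simps)
    define Q where "Q = (\<Prod>w\<in>W. [:-w,1:]) * [:-cis ga,1:]^(D - card W)"
    have degQ: "degree Q < n j"
      using degree_Q[OF finW, of "cis ga" "D - card W"] DW D_def nj1 unfolding Q_def by linarith
    have Wc: "W = {w \<in> cis ` {aj<..<bj}. poly P w = 0 \<and> odd (order w P)}"
      unfolding W_def arc_int_def ..
    have XP: "X z = cis (- (real (N+1) * argt t0 z / 2)) * poly P z" if nz: "norm z = 1" for z
    proof -
      have z0: "z \<noteq> 0" using nz by auto
      have "poly P z = cis (real (N+1) * argt t0 z / 2) * X z"
        using hP z0 by (simp add: halfpow_unit[OF nz] N_def add.commute)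
      then have "cis (- (real (N+1) * argt t0 z / 2)) * poly P z
          = (cis (- (real (N+1) * argt t0 z / 2)) * cis (real (N+1) * argt t0 z / 2)) * X z"
        by (simp add: mult.assoc)
      also have "\<dots> = X z" by (simp add: cis_mult)
      finally show ?thesis by simp
    qed
    have inv: "cis (- (real (N+1) * th / 2)) * poly P (cis th)
             = \<tau> * cnj (cis (- (real (N+1) * th / 2)) * poly P (cis th))" for th
    proof -
      define z where "z = cis th"
      have nz: "norm z = 1" "z \<noteq> 0" using z_def by auto
      obtain k :: int where k: "argt t0 z = th + 2*pi*k" using argt_cis_int z_def by blast
      define ze where "ze = cis (real (N+1) * pi * k)"
      have zec: "cnj ze = ze"
      proof -
        have "sin (real (N+1) * pi * k) = 0"
          using sin_npi_int[of "int (N+1) * k"] by (simp add: algebra_simps)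
        then show ?thesis unfolding ze_def by (simp add: complex_eq_iff)
      qed
      have "cis (- (real (N+1) * th / 2)) * poly P z
          = cis (- (real (N+1) * th / 2)) * cis (real (N+1) * argt t0 z / 2) * X z"
        using XP[OF nz(1)] by (simp add: cis_mult)
      also have "cis (- (real (N+1) * th / 2)) * cis (real (N+1) * argt t0 z / 2) = ze"
        unfolding ze_def k by (simp add: cis_mult algebra_simps add_divide_distrib)
      finally have v: "cis (- (real (N+1) * th / 2)) * poly P z = ze * X z" .
      have iz: "1 / cnj z = z" unfolding z_def by (simp add: cis_cnj divide_inverse)
      have "X z = \<tau> * cnj (X z)" using Xinv[OF nz(2)] iz by simp
      then show ?thesis unfolding z_def[symmetric] v using zec
        by (metis complex_cnj_mult mult.left_commute)
    qed
    obtain kap where kap: "\<And>th. th \<in> {aj..bj} \<Longrightarrow>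
        Im (kap * (cis (- (real (N+1) * th / 2)) * poly P (cis th)) * cnj (cis (- (real D * th / 2)) * poly Q (cis th))) = 0 \<and>
        Re (kap * (cis (- (real (N+1) * th / 2)) * poly P (cis th)) * cnj (cis (- (real D * th / 2)) * poly Q (cis th))) \<ge> 0 \<and>
        (poly P (cis th) \<noteq> 0 \<longrightarrow>
          Re (kap * (cis (- (real (N+1) * th / 2)) * poly P (cis th)) * cnj (cis (- (real D * th / 2)) * poly Q (cis th))) > 0)"
      using core_sign[OF P0 assms(3) inv abj gab Wc DW Q_def] by blast
    have measmu: "f \<in> borel_measurable mu" if "f \<in> borel_measurable borel" for f :: "complex \<Rightarrow> complex"
      by (subst measurable_cong_sets[OF sM refl]) (rule that)
    have measmuR: "f \<in> borel_measurable mu" if "f \<in> borel_measurable borel" for f :: "complex \<Rightarrow> real"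
      by (subst measurable_cong_sets[OF sM refl]) (rule that)
    have fm: "finite_measure mu" using finM by (intro finite_measureI) simp
    have Xeq: "X = (\<lambda>z. if z \<in> {0} then X 0 else span_eval t0 (N + 1) cs z)"
      using cs(2) by (intro ext) simp
    have Xm: "X \<in> borel_measurable borel"
      by (subst Xeq, rule measurable_If_set) auto
    have Qm: "poly Q \<in> borel_measurable borel"
      by (intro borel_measurable_continuous_onI continuous_intros)
    have AEarc: "AE z in mu. z \<in> arc_cl aj bj"
      by (rule AE_I'[OF msupp_null[OF sM]]) (use suppS in auto)
    have AEcut: "AE z in mu. bj = t0 + 2*pi \<longrightarrow> z \<noteq> cis t0"
    proof (cases "bj = t0 + 2*pi")
      case True
      then have "j = r - 1" by (rule blast)
      then have e0: "emeasure mu {cis t0} = 0" using ang mu_def by simp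
      have "{cis t0} \<in> null_sets mu" using e0 sM by (simp add: null_sets_def)
      then show ?thesis by (rule AE_I') auto
    qed simp
    have AEgood: "AE z in mu. \<exists>th. z = cis th \<and> th \<in> {aj..bj} \<and> argt t0 z = th"
      using AEarc AEcut
    proof eventually_elim
      case (elim z)
      then obtain th where th: "th \<in> {aj..bj}" "z = cis th" unfolding arc_cl_def by auto
      show ?case
      proof (cases "th < t0 + 2*pi")
        case True
        then have "argt t0 z = th" using th t0a argt_cis by auto
        then show ?thesis using th by blast
      next
        case False
        then have "th = t0 + 2*pi" "bj = t0 + 2*pi" using th bt0 by auto
        moreover have "cis (t0 + 2*pi) = cis t0" using cis_add_int[of t0 1] by simp
        ultimately show ?thesis using elim th by simp
      qed
    qed
    have AEnorm: "AE z in mu. norm z = 1" using AEgood by eventually_elim (metis norm_cis)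
    define B where "B = (\<Sum>i\<le>N+1. norm (cs ! i))"
    have Xb: "norm (X z) \<le> B" if nz: "norm z = 1" for z
    proof -
      have "X z = (\<Sum>i\<le>N+1. cs ! i * halfpow t0 (2 * int i - int (N+1)) z)"
      proof -
        have "z \<noteq> 0" using nz by auto
        then show ?thesis using cs(2) unfolding span_eval_def by blast
      qed
      also have "norm \<dots> \<le> (\<Sum>i\<le>N+1. norm (cs ! i * halfpow t0 (2 * int i - int (N+1)) z))"
        by (rule norm_sum)
      also have "\<dots> = B" unfolding B_def by (simp add: norm_mult halfpow_unit[OF nz])
      finally show ?thesis .
    qed
    define g where "g k z = X z * halfpow t0 (int (n j) - 1 - 2 * int k) z" for k z
    have gint: "integrable mu (g k)" for k
    proof (rule finite_measure.integrable_const_bound[OF fm, of _ B])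
      show "AE z in mu. norm (g k z) \<le> B" using AEnorm
        by eventually_elim (simp add: g_def norm_mult halfpow_unit Xb)
      show "g k \<in> borel_measurable mu" unfolding g_def by (intro measmu) (measurable, auto intro: Xm halfpow_measurable)
    qed
    define f where "f z = X z * cnj (halfpow t0 (- (int (n j) - 1)) z * poly Q z)" for z
    have fmeas: "f \<in> borel_measurable mu"
    proof -
      have hq: "(\<lambda>z. halfpow t0 (- (int (n j) - 1)) z * poly Q z) \<in> borel_measurable borel"
        by (intro borel_measurable_times halfpow_measurable Qm)
      have cq: "(\<lambda>z. cnj (halfpow t0 (- (int (n j) - 1)) z * poly Q z)) \<in> borel_measurable borel"
        by (rule borel_measurable_continuous_on[OF _ hq]) (intro continuous_intros)
      show ?thesis unfolding f_def by (intro measmu borel_measurable_times Xm cq)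
    qed
    have fsum: "f z = (\<Sum>k<n j. cnj (coeff Q k) * g k z)" if nz: "norm z = 1" for z
      unfolding f_def g_def conj_q_expand[OF nz degQ nj1]
      by (simp add: sum_distrib_left algebra_simps)
    have sum_meas: "(\<lambda>z. \<Sum>k<n j. cnj (coeff Q k) * g k z) \<in> borel_measurable mu"
      using gint by (intro borel_measurable_sum borel_measurable_times borel_measurable_const) auto
    have fae: "AE z in mu. f z = (\<Sum>k<n j. cnj (coeff Q k) * g k z)"
      using AEnorm by eventually_elim (simp add: fsum)
    have fint: "integrable mu f"
      by (rule integrable_cong_AE_imp[OF _ fmeas]) (use gint fae in \<open>auto simp: eq_commute\<close>)
    have intf: "integral\<^sup>L mu f = 0"
    proof -
      have "integral\<^sup>L mu f = integral\<^sup>L mu (\<lambda>z. \<Sum>k<n j. cnj (coeff Q k) * g k z)"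
        by (rule integral_cong_AE[OF fmeas sum_meas fae])
      also have "\<dots> = (\<Sum>k<n j. cnj (coeff Q k) * integral\<^sup>L mu (g k))"
        using gint by (simp add: integral_sum)
      also have "\<dots> = 0" by (intro sum.neutral) (auto simp: orth g_def[abs_def])
      finally show ?thesis .
    qed
    define F where "F z = Re (kap * f z)" for z
    have Fint: "integrable mu F" unfolding F_def using fint by auto
    have intF: "integral\<^sup>L mu F = 0"
      unfolding F_def using integral_Re[OF integrable_mult_right[OF fint, of kap]] intf by simp
    have fth: "kap * f z = kap * (cis (- (real (N+1) * th / 2)) * poly P (cis th)) * cnj (cis (- (real D * th / 2)) * poly Q (cis th))"
      if "z = cis th" "argt t0 z = th" for z th
    proof -
      have nz: "norm z = 1" using that by simp
      have h1: "halfpow t0 (- (int (n j) - 1)) z = cis (real_of_int (- (int (n j) - 1)) * th / 2)"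
        using halfpow_unit[OF nz, of t0 "- (int (n j) - 1)"] that(2) by simp
      have "real_of_int (- (int (n j) - 1)) = - real D" using nj1 D_def by (simp add: of_nat_diff)
      then have "halfpow t0 (- (int (n j) - 1)) z = cis (- (real D * th / 2))"
        using h1 by simp
      then show ?thesis unfolding f_def XP[OF nz] using that by (simp add: mult.assoc)
    qed
    have AEF: "AE z in mu. 0 \<le> F z \<and> (poly P z \<noteq> 0 \<longrightarrow> 0 < F z)"
      using AEgood
    proof eventually_elim
      case (elim z)
      then obtain th where th: "z = cis th" "th \<in> {aj..bj}" "argt t0 z = th" by blast
      show ?case unfolding F_def fth[OF th(1) th(3)] using kap[OF th(2)] th(1) by simp
    qed
    have "AE z in mu. F z = 0"
      using integral_nonneg_eq_0_iff_AE[OF Fint] AEF intF by (auto elim: AE_mp)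
    then have AEroot: "AE z in mu. poly P z = 0" using AEF by eventually_elim auto
    obtain z1 where z1: "z1 \<in> msupp mu" "poly P z1 \<noteq> 0"
    proof -
      have "infinite (msupp mu - {z. poly P z = 0})" using infS finR by (rule Diff_infinite_finite[rotated])
      then obtain z1 where "z1 \<in> msupp mu - {z. poly P z = 0}" by (meson finite.emptyI finite_subset subsetI)
      then show ?thesis using that by auto
    qed
    have "open (- {z. poly P z = 0})" using finR by (simp add: finite_imp_closed open_Compl)
    then obtain e where e: "e > 0" "ball z1 e \<subseteq> - {z. poly P z = 0}"
      using z1(2) open_contains_ball by blast
    have aeb: "AE z in mu. z \<notin> ball z1 e" using AEroot by eventually_elim (use e(2) in auto)
    have bs: "ball z1 e \<in> sets mu" using sM by simp
    have bset: "{x \<in> space mu. \<not> x \<notin> ball z1 e} = ball z1 e" using spM by auto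
    have "emeasure mu (ball z1 e) = 0"
      using AE_iff_measurable[OF bs bset] aeb by simp
    moreover have "emeasure mu (ball z1 e) \<noteq> 0" using z1(1) e(1) unfolding msupp_def by blast
    ultimately show False by simp
  qed
qed


end
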